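(* For all $n\ge1$, $$a_{\{0101,0102,0112,0120\}}(n)=a_{\{0101,0102,0112,0121\}}(n)=a_{\{0101,0112,0120,0121\}}(n)=1+\binom{n+1}{3}.$$
   Context: An ascent in an integer sequence $s_1\cdots s_m$ is an index $j$ with $s_j<s_{j+1}$; $\mathrm{asc}$ denotes the number of ascents. An ascent sequence is a sequence $x_1\cdots x_n$ of nonnegative integers with $x_1=0$ and $x_i\le 1+\mathrm{asc}(x_1\cdots x_{i-1})$ for all $i\ge2$. The reduction $\mathrm{red}(w)$ of an integer sequence $w$ replaces the $i$-th smallest distinct letter of $w$ by $i-1$; a pattern is a reduced sequence. A sequence $x$ contains a pattern $p=p_1\cdots p_k$ if there are indices $i_1<\cdots<i_k$ with $\mathrm{red}(x_{i_1}\cdots x_{i_k})=p$; otherwise $x$ avoids $p$. For a finite set $P$ of patterns, $a_P(n)$ denotes the number of ascent sequences of length $n$ avoiding every pattern in $P$. *)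

theory Defs
  imports Main
begin

definition asc :: "nat list \<Rightarrow> nat" where
  "asc s = card {j. Suc j < length s \<and> s ! j < s ! Suc j}"

(* ascent sequences: x_1 = 0 and x_i \<le> 1 + asc(x_1...x_{i-1}) for i \<ge> 2
   (0-indexed: x!0 = 0 and x!i \<le> 1 + asc (take i x) for 1 \<le> i < length x) *)
definition ascent_seq :: "nat list \<Rightarrow> bool" where
  "ascent_seq x \<longleftrightarrow> x \<noteq> [] \<and> x ! 0 = 0 \<and>
     (\<forall>i. 1 \<le> i \<and> i < length x \<longrightarrow> x ! i \<le> 1 + asc (take i x))"

definition red :: "nat list \<Rightarrow> nat list" where
  "red w = map (\<lambda>v. card {u \<in> set w. u < v}) w"

definition contains :: "nat list \<Rightarrow> nat list \<Rightarrow> bool" where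
  "contains x p \<longleftrightarrow> (\<exists>is. sorted_wrt (<) is \<and> length is = length p \<and>
      (\<forall>i\<in>set is. i < length x) \<and> red (map (\<lambda>i. x ! i) is) = p)"

definition avoids :: "nat list \<Rightarrow> nat list \<Rightarrow> bool" where
  "avoids x p \<longleftrightarrow> \<not> contains x p"

definition a_P :: "nat list set \<Rightarrow> nat \<Rightarrow> nat" where
  "a_P P n = card {x. ascent_seq x \<and> length x = n \<and> (\<forall>p\<in>P. avoids x p)}"

end

theory Submission
  imports Defs
begin

lemma red3: assumes "a < b" "b < (c::nat)" "set w = {a,b,c}"
  shows "red w = map (\<lambda>v. if v = a then 0 else if v = b then 1 else 2) w"
proof -
  have 1: "{u\<in>{a,b,c}. u<a} = {}" "{u\<in>{a,b,c}. u<b} = {a}" "{u\<in>{a,b,c}. u<c} = {a,b}"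
    using assms by auto
  have "card {u\<in>set w. u<v} = (if v = a then 0 else if v = b then 1 else 2)" if "v \<in> set w" for v
  proof -
    have "v = a \<or> v = b \<or> v = c" using that assms(3) by auto
    then show ?thesis
    proof (elim disjE)
      assume "v = a" then show ?thesis by (simp only: assms(3) 1) simp
    next
      assume "v = b" then show ?thesis using assms(1) by (simp only: assms(3) 1) simp
    next
      assume "v = c" then show ?thesis using assms(1,2) by (simp only: assms(3) 1) simp
    qed
  qed
  then show ?thesis unfolding red_def by (intro map_cong) auto
qed

lemma red2: assumes "a < (b::nat)" "set w = {a,b}"
  shows "red w = map (\<lambda>v. if v = a then 0 else 1) w"
proof -
  have 1: "{u\<in>{a,b}. u<a} = {}" "{u\<in>{a,b}. u<b} = {a}"
    using assms by auto
  have "card {u\<in>set w. u<v} = (if v = a then 0 else 1)" if "v \<in> set w" for v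
  proof -
    have "v = a \<or> v = b" using that assms(2) by auto
    then show ?thesis
    proof (elim disjE)
      assume "v = a" then show ?thesis by (simp only: assms(2) 1) simp
    next
      assume "v = b" then show ?thesis using assms(1) by (simp only: assms(2) 1) simp
    qed
  qed
  then show ?thesis unfolding red_def by (intro map_cong) auto
qed

lemma red_0101: assumes "a < (b::nat)" shows "red [a,b,a,b] = [0,1,0,1]"
proof - have "set [a,b,a,b] = {a,b}" by auto
  then show ?thesis using assms by (simp add: red2[of a b])
qed
lemma red_0102: assumes "a < (b::nat)" "b < c" shows "red [a,b,a,c] = [0,1,0,2]"
proof - have "set [a,b,a,c] = {a,b,c}" by auto
  then show ?thesis using assms by (simp add: red3[of a b c])
qed
lemma red_0112: assumes "a < (b::nat)" "b < c" shows "red [a,b,b,c] = [0,1,1,2]"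
proof - have "set [a,b,b,c] = {a,b,c}" by auto
  then show ?thesis using assms by (simp add: red3[of a b c])
qed
lemma red_0120: assumes "a < (b::nat)" "b < c" shows "red [a,b,c,a] = [0,1,2,0]"
proof - have "set [a,b,c,a] = {a,b,c}" by auto
  then show ?thesis using assms by (simp add: red3[of a b c])
qed
lemma red_0121: assumes "a < (b::nat)" "b < c" shows "red [a,b,c,b] = [0,1,2,1]"
proof - have "set [a,b,c,b] = {a,b,c}" by auto
  then show ?thesis using assms by (simp add: red3[of a b c])
qed

lemma red_order:
  assumes "red w = p" "i < length w" "j < length w"
  shows "w!i < w!j \<longleftrightarrow> p!i < p!j"
proof -
  have pi: "p!i = card {u \<in> set w. u < w!i}" and pj: "p!j = card {u \<in> set w. u < w!j}"
    using assms unfolding red_def by auto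
  have A: "card {u \<in> set w. u < a} < card {u \<in> set w. u < b}" if "a < b" "a \<in> set w" for a b
    by (rule psubset_card_mono) (use that in auto)
  have B: "card {u \<in> set w. u < a} \<le> card {u \<in> set w. u < b}" if "a \<le> b" for a b
    by (rule card_mono) (use that in auto)
  show ?thesis
  proof
    assume "w!i < w!j" then show "p!i < p!j" unfolding pi pj using A assms by auto
  next
    assume "p!i < p!j" then show "w!i < w!j" unfolding pi pj using B[of "w!j" "w!i"] by fastforce
  qed
qed

lemma contains_I:
  assumes "i1 < i2" "i2 < i3" "i3 < i4" "i4 < length y" "red [y!i1, y!i2, y!i3, y!i4] = p"
  shows "contains y p"
  unfolding contains_def
  by (rule exI[of _ "[i1,i2,i3,i4]"]) (use assms in \<open>auto simp: red_def\<close>)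


lemma contains_E2:
  assumes "contains y p" "length p = 4"
  obtains i1 i2 i3 i4 where "i1 < i2" "i2 < i3" "i3 < i4" "i4 < length y"
    "y!i1 < y!i2 \<longleftrightarrow> p!0 < p!1" "y!i1 < y!i3 \<longleftrightarrow> p!0 < p!2" "y!i1 < y!i4 \<longleftrightarrow> p!0 < p!3"
    "y!i2 < y!i3 \<longleftrightarrow> p!1 < p!2" "y!i2 < y!i4 \<longleftrightarrow> p!1 < p!3" "y!i3 < y!i4 \<longleftrightarrow> p!2 < p!3"
    "y!i2 < y!i1 \<longleftrightarrow> p!1 < p!0" "y!i3 < y!i1 \<longleftrightarrow> p!2 < p!0" "y!i4 < y!i1 \<longleftrightarrow> p!3 < p!0"
    "y!i3 < y!i2 \<longleftrightarrow> p!2 < p!1" "y!i4 < y!i2 \<longleftrightarrow> p!3 < p!1" "y!i4 < y!i3 \<longleftrightarrow> p!3 < p!2"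
proof -
  obtain ix where ix: "sorted_wrt (<) ix" "length ix = 4" "\<forall>i\<in>set ix. i < length y"
     "red (map (\<lambda>i. y ! i) ix) = p"
    using assms unfolding contains_def by auto
  from ix(2) obtain i1 i2 i3 i4 where ii: "ix = [i1,i2,i3,i4]"
    by (auto simp: numeral_eq_Suc length_Suc_conv)
  define w where "w = [y!i1, y!i2, y!i3, y!i4]"
  have r: "red w = p" using ix(4) unfolding ii w_def by simp
  have lw: "length w = 4" unfolding w_def by simp
  have H: "w!a < w!b \<longleftrightarrow> p!a < p!b" if "a < 4" "b < 4" for a b
    using red_order[OF r] that lw by simp
  have o: "i1 < i2" "i2 < i3" "i3 < i4" "i4 < length y" using ix(1,3) unfolding ii by auto
  show ?thesis
    apply (rule that[OF o])
    using H[of 0 1] H[of 0 2] H[of 0 3] H[of 1 2] H[of 1 3] H[of 2 3]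
      H[of 1 0] H[of 2 0] H[of 3 0] H[of 2 1] H[of 3 1] H[of 3 2]
    by (simp_all add: w_def)
qed

definition Tri :: "nat \<Rightarrow> (nat\<times>nat\<times>nat) set" where
  "Tri n = {(i,j,l). i<j \<and> j<l \<and> l \<le> n}"

definition Aset :: "nat list set \<Rightarrow> nat \<Rightarrow> nat list set" where
  "Aset P n = {x. ascent_seq x \<and> length x = n \<and> (\<forall>p\<in>P. avoids x p)}"

lemma card_T2: "card {(i::nat,j::nat). i<j \<and> j<m} = m choose 2"
proof (induction m)
  case 0 then show ?case by simp
next
  case (Suc m)
  have e: "{(i::nat,j::nat). i<j \<and> j<Suc m} = {(i,j). i<j \<and> j<m} \<union> (\<lambda>i. (i,m)) ` {..<m}" by auto
  have f: "finite {(i::nat,j::nat). i<j \<and> j<m}" by (rule finite_subset[of _ "{..<m}\<times>{..<m}"]) auto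
  have d: "{(i::nat,j::nat). i<j \<and> j<m} \<inter> (\<lambda>i. (i,m)) ` {..<m} = {}" by auto
  have "card {(i::nat,j::nat). i<j \<and> j<Suc m} = (m choose 2) + m"
    unfolding e using Suc f d by (simp add: card_Un_disjoint card_image inj_on_def)
  then show ?case by (simp add: numeral_2_eq_2)
qed

lemma card_T3: "card {(i::nat,j::nat,l::nat). i<j \<and> j<l \<and> l<m} = m choose 3"
proof (induction m)
  case 0 then show ?case by simp
next
  case (Suc m)
  have e: "{(i::nat,j::nat,l::nat). i<j \<and> j<l \<and> l<Suc m} = {(i,j,l). i<j \<and> j<l \<and> l<m} \<union> (\<lambda>(i,j). (i,j,m)) ` {(i,j). i<j \<and> j<m}" by (auto simp: less_Suc_eq image_iff)
  have f: "finite {(i::nat,j::nat,l::nat). i<j \<and> j<l \<and> l<m}" by (rule finite_subset[of _ "{..<m}\<times>{..<m}\<times>{..<m}"]) auto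
  have f2: "finite {(i::nat,j::nat). i<j \<and> j<m}" by (rule finite_subset[of _ "{..<m}\<times>{..<m}"]) auto
  have d: "{(i::nat,j::nat,l::nat). i<j \<and> j<l \<and> l<m} \<inter> (\<lambda>(i,j). (i,j,m)) ` {(i,j). i<j \<and> j<m} = {}" by auto
  have i: "inj_on (\<lambda>(i,j). (i::nat,j::nat,m)) {(i,j). i<j \<and> j<m}" by (auto simp: inj_on_def)
  have "card {(i::nat,j::nat,l::nat). i<j \<and> j<l \<and> l<Suc m} = (m choose 3) + (m choose 2)"
    unfolding e using Suc f f2 d i card_T2 by (simp add: card_Un_disjoint card_image)
  then show ?case by (simp add: numeral_3_eq_3 numeral_2_eq_2)
qed

lemma Tri_eq: "Tri n = {(i,j,l). i<j \<and> j<l \<and> l<Suc n}"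
  unfolding Tri_def by auto

lemma card_Tri: "card (Tri n) = (n+1) choose 3"
  unfolding Tri_eq using card_T3 by simp

lemma finite_Tri: "finite (Tri n)"
  unfolding Tri_def by (rule finite_subset[of _ "{..n}\<times>{..n}\<times>{..n}"]) auto

lemma ascent_snoc:
  assumes "ascent_seq (x@[v])" "x \<noteq> []"
  shows "ascent_seq x" "v \<le> 1 + asc x"
proof -
  have A: "(x@[v])!0 = 0" "\<And>i. 1 \<le> i \<Longrightarrow> i < Suc (length x) \<Longrightarrow> (x@[v]) ! i \<le> 1 + asc (take i (x@[v]))"
    using assms unfolding ascent_seq_def by auto
  show "ascent_seq x" unfolding ascent_seq_def
  proof (intro conjI allI impI)
    show "x \<noteq> []" by fact
    show "x!0 = 0" using A(1) assms(2) by (simp add: nth_append)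
    fix i assume "1 \<le> i \<and> i < length x"
    then show "x ! i \<le> 1 + asc (take i x)" using A(2)[of i] by (simp add: nth_append)
  qed
  have "1 \<le> length x" using assms(2) by (cases x) auto
  then show "v \<le> 1 + asc x" using A(2)[of "length x"] by (simp add: nth_append)
qed

lemma contains_snoc: assumes "contains x p" shows "contains (x@[v]) p"
proof -
  obtain ix where ix: "sorted_wrt (<) ix" "length ix = length p" "\<forall>i\<in>set ix. i < length x"
     "red (map (\<lambda>i. x ! i) ix) = p"
    using assms unfolding contains_def by auto
  have e: "map (\<lambda>i. (x@[v]) ! i) ix = map (\<lambda>i. x ! i) ix"
    using ix(3) by (intro map_cong) (auto simp: nth_append)
  show ?thesis unfolding contains_def
    by (rule exI[of _ ix]) (use ix in \<open>simp only: e, auto\<close>)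
qed

lemma zeros_avoid: assumes "length p = 4" "p!0 < p!1" shows "avoids (replicate n 0) p"
  unfolding avoids_def
proof
  assume "contains (replicate n 0) p"
  then obtain i1 i2 i3 i4 where "i1 < i2" "i2 < i3" "i3 < i4" "i4 < length (replicate n (0::nat))"
    "replicate n 0!i1 < replicate n (0::nat)!i2 \<longleftrightarrow> p!0 < p!1"
    using contains_E2[OF _ assms(1)] by metis
  then show False using assms by simp
qed

lemma zeros_asc: "1 \<le> n \<Longrightarrow> ascent_seq (replicate n 0)"
  unfolding ascent_seq_def by auto

lemma generic:
  assumes P4: "\<forall>p\<in>P. length p = 4 \<and> p!0 < p!1"
  and h1: "\<And>n t. 1 \<le> n \<Longrightarrow> t \<in> Tri n \<Longrightarrow> F n t \<in> Aset P n"
  and inj: "\<And>n. inj_on (F n) (Tri n)"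
  and nz: "\<And>n t. t \<in> Tri n \<Longrightarrow> F n t \<noteq> replicate n 0"
  and h3: "\<And>n x v. 1 \<le> n \<Longrightarrow> x \<in> insert (replicate n 0) (F n ` Tri n) \<Longrightarrow> v \<le> 1 + asc x
      \<Longrightarrow> (\<forall>p\<in>P. avoids (x@[v]) p)
      \<Longrightarrow> x@[v] \<in> insert (replicate (Suc n) 0) (F (Suc n) ` Tri (Suc n))"
  and n1: "1 \<le> n"
  shows "a_P P n = 1 + ((n+1) choose 3)"
proof -
  have Z: "replicate m 0 \<in> Aset P m" if "1 \<le> m" for m
    unfolding Aset_def using zeros_asc[OF that] zeros_avoid P4 by auto
  have sub: "Aset P m \<subseteq> insert (replicate m 0) (F m ` Tri m)" if "1 \<le> m" for m
    using that
  proof (induction m)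
    case 0 then show ?case by simp
  next
    case (Suc m)
    show ?case
    proof
      fix y assume y: "y \<in> Aset P (Suc m)"
      show "y \<in> insert (replicate (Suc m) 0) (F (Suc m) ` Tri (Suc m))"
      proof (cases "m = 0")
        case True
        then have "y = [0]" using y unfolding Aset_def ascent_seq_def
          by (cases y) auto
        then show ?thesis using True by simp
      next
        case False
        have ly: "length y = Suc m" using y unfolding Aset_def by simp
        then have yy: "y = butlast y @ [last y]" by (metis append_butlast_last_id list.size(3) nat.distinct(1))
        have lb: "length (butlast y) = m" using ly by simp
        then have ne: "butlast y \<noteq> []" using False by (metis list.size(3))
        have asy: "ascent_seq (butlast y @ [last y])" using y yy unfolding Aset_def by simp
        have av: "\<forall>p\<in>P. avoids (butlast y @ [last y]) p" using y yy unfolding Aset_def by simp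
        have "butlast y \<in> Aset P m"
          unfolding Aset_def using ascent_snoc(1)[OF asy ne] lb av contains_snoc
          unfolding avoids_def by blast
        then have "butlast y \<in> insert (replicate m 0) (F m ` Tri m)" using Suc False by auto
        then have "butlast y @ [last y] \<in> insert (replicate (Suc m) 0) (F (Suc m) ` Tri (Suc m))"
          using h3[of m "butlast y" "last y"] False ascent_snoc(2)[OF asy ne] av by auto
        then show ?thesis using yy by simp
      qed
    qed
  qed
  have eq: "Aset P n = insert (replicate n 0) (F n ` Tri n)"
    using sub[OF n1] Z[OF n1] h1[OF n1] by auto
  have "a_P P n = card (Aset P n)" unfolding a_P_def Aset_def by simp
  also have "\<dots> = 1 + card (F n ` Tri n)" unfolding eq
    using nz finite_Tri by (subst card_insert_disjoint) (auto, metis)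
  also have "\<dots> = 1 + ((n+1) choose 3)" using card_image[OF inj] card_Tri by simp
  finally show ?thesis .
qed

lemma asc_map: "asc (map f [0..<n]) = card {q. Suc q < n \<and> f q < f (Suc q)}"
  unfolding asc_def by (rule arg_cong[where f=card]) auto

lemma take_map_upt: "p \<le> n \<Longrightarrow> take p (map f [0..<n]) = map f [0..<p]"
  by (simp add: take_map)

lemma asc_ge: assumes "\<And>q. q \<in> S \<Longrightarrow> Suc q < p \<and> f q < f (Suc q)"
  shows "card S \<le> asc (map f [0..<p])"
  unfolding asc_map
  by (rule card_mono) (use assms in \<open>auto intro: finite_subset[of _ "{..<p}"]\<close>)

lemma asc_le: assumes "\<And>q. Suc q < n \<Longrightarrow> f q < f (Suc q) \<Longrightarrow> q \<in> S" "finite S"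
  shows "asc (map f [0..<n]) \<le> card S"
  unfolding asc_map by (rule card_mono) (use assms in auto)

lemma ascent_map: assumes "f 0 = 0" "1 \<le> n"
  "\<And>p. 1 \<le> p \<Longrightarrow> p < n \<Longrightarrow> f p \<le> 1 + asc (map f [0..<p])"
  shows "ascent_seq (map f [0..<n])"
  unfolding ascent_seq_def using assms by (auto simp: take_map_upt)

lemma snoc_map: "(\<And>p. p<n \<Longrightarrow> f p = g p) \<Longrightarrow> v = g n \<Longrightarrow> map f [0..<n] @ [v] = map g [0..<Suc n]"
  by simp

lemma nth_snoc_map: "q \<le> n \<Longrightarrow> (map f [0..<n] @ [v]) ! q = (if q < n then f q else v)"
  by (auto simp: nth_append)

lemma map_eqD: "map f [0..<n] = map g [0..<n] \<Longrightarrow> p < n \<Longrightarrow> f p = g p"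
  by (metis (no_types) add_0 diff_zero nth_map_upt)

lemma avoid_gen:
  assumes P: "p = [p0,p1,p2,p3]"
  and "\<And>i1 i2 i3 i4. i1<i2 \<Longrightarrow> i2<i3 \<Longrightarrow> i3<i4 \<Longrightarrow> i4<n \<Longrightarrow>
    (f i1 < f i2 \<longleftrightarrow> p0 < p1) \<Longrightarrow> (f i1 < f i3 \<longleftrightarrow> p0 < p2) \<Longrightarrow> (f i1 < f i4 \<longleftrightarrow> p0 < p3) \<Longrightarrow>
    (f i2 < f i3 \<longleftrightarrow> p1 < p2) \<Longrightarrow> (f i2 < f i4 \<longleftrightarrow> p1 < p3) \<Longrightarrow> (f i3 < f i4 \<longleftrightarrow> p2 < p3) \<Longrightarrow>
    (f i2 < f i1 \<longleftrightarrow> p1 < p0) \<Longrightarrow> (f i3 < f i1 \<longleftrightarrow> p2 < p0) \<Longrightarrow> (f i4 < f i1 \<longleftrightarrow> p3 < p0) \<Longrightarrow>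
    (f i3 < f i2 \<longleftrightarrow> p2 < p1) \<Longrightarrow> (f i4 < f i2 \<longleftrightarrow> p3 < p1) \<Longrightarrow> (f i4 < f i3 \<longleftrightarrow> p3 < p2) \<Longrightarrow> False"
  shows "avoids (map f [0..<n]) p"
  unfolding avoids_def
proof
  assume c: "contains (map f [0..<n]) p"
  have l4: "length p = 4" using P by simp
  then obtain i1 i2 i3 i4 where H: "i1 < i2" "i2 < i3" "i3 < i4" "i4 < length (map f [0..<n])"
    "map f [0..<n]!i1 < map f [0..<n]!i2 \<longleftrightarrow> p!0 < p!1" "map f [0..<n]!i1 < map f [0..<n]!i3 \<longleftrightarrow> p!0 < p!2" "map f [0..<n]!i1 < map f [0..<n]!i4 \<longleftrightarrow> p!0 < p!3"
    "map f [0..<n]!i2 < map f [0..<n]!i3 \<longleftrightarrow> p!1 < p!2" "map f [0..<n]!i2 < map f [0..<n]!i4 \<longleftrightarrow> p!1 < p!3" "map f [0..<n]!i3 < map f [0..<n]!i4 \<longleftrightarrow> p!2 < p!3"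
    "map f [0..<n]!i2 < map f [0..<n]!i1 \<longleftrightarrow> p!1 < p!0" "map f [0..<n]!i3 < map f [0..<n]!i1 \<longleftrightarrow> p!2 < p!0" "map f [0..<n]!i4 < map f [0..<n]!i1 \<longleftrightarrow> p!3 < p!0"
    "map f [0..<n]!i3 < map f [0..<n]!i2 \<longleftrightarrow> p!2 < p!1" "map f [0..<n]!i4 < map f [0..<n]!i2 \<longleftrightarrow> p!3 < p!1" "map f [0..<n]!i4 < map f [0..<n]!i3 \<longleftrightarrow> p!3 < p!2"
    using contains_E2[OF c l4] by blast
  have l: "i1 < n" "i2 < n" "i3 < n" "i4 < n" using H(1-4) by auto
  show False
    apply (rule assms(2)[OF H(1-3) l(4)])
    using H(5-16) l P by simp_all
qed

lemma avoid_0101: assumes H: "\<And>i1 i2 i3 i4. i1<i2 \<Longrightarrow> i2<i3 \<Longrightarrow> i3<i4 \<Longrightarrow> i4<n \<Longrightarrow> f i1 < f i2 \<Longrightarrow> f i3 = f i1 \<Longrightarrow> f i4 = f i2 \<Longrightarrow> False"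
  shows "avoids (map f [0..<n]) [0,1,0,1]"
  apply (rule avoid_gen[OF refl], rule H, assumption+)
  apply simp_all
  done
lemma avoid_0102: assumes H: "\<And>i1 i2 i3 i4. i1<i2 \<Longrightarrow> i2<i3 \<Longrightarrow> i3<i4 \<Longrightarrow> i4<n \<Longrightarrow> f i1 < f i2 \<Longrightarrow> f i3 = f i1 \<Longrightarrow> f i2 < f i4 \<Longrightarrow> False"
  shows "avoids (map f [0..<n]) [0,1,0,2]"
  apply (rule avoid_gen[OF refl], rule H, assumption+)
  apply simp_all
  done
lemma avoid_0112: assumes H: "\<And>i1 i2 i3 i4. i1<i2 \<Longrightarrow> i2<i3 \<Longrightarrow> i3<i4 \<Longrightarrow> i4<n \<Longrightarrow> f i1 < f i2 \<Longrightarrow> f i3 = f i2 \<Longrightarrow> f i2 < f i4 \<Longrightarrow> False"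
  shows "avoids (map f [0..<n]) [0,1,1,2]"
  apply (rule avoid_gen[OF refl], rule H, assumption+)
  apply simp_all
  done
lemma avoid_0120: assumes H: "\<And>i1 i2 i3 i4. i1<i2 \<Longrightarrow> i2<i3 \<Longrightarrow> i3<i4 \<Longrightarrow> i4<n \<Longrightarrow> f i1 < f i2 \<Longrightarrow> f i2 < f i3 \<Longrightarrow> f i4 = f i1 \<Longrightarrow> False"
  shows "avoids (map f [0..<n]) [0,1,2,0]"
  apply (rule avoid_gen[OF refl], rule H, assumption+)
  apply simp_all
  done
lemma avoid_0121: assumes H: "\<And>i1 i2 i3 i4. i1<i2 \<Longrightarrow> i2<i3 \<Longrightarrow> i3<i4 \<Longrightarrow> i4<n \<Longrightarrow> f i1 < f i2 \<Longrightarrow> f i2 < f i3 \<Longrightarrow> f i4 = f i2 \<Longrightarrow> False"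
  shows "avoids (map f [0..<n]) [0,1,2,1]"
  apply (rule avoid_gen[OF refl], rule H, assumption+)
  apply simp_all
  done

lemma rep_map: "replicate n (0::nat) = map (\<lambda>_. 0) [0..<n]"
  by (simp add: map_replicate_const)

lemma asc_zeros: "asc (replicate n 0) = 0"
proof -
  have "asc (map (\<lambda>_. 0::nat) [0..<n]) \<le> card ({}::nat set)" by (rule asc_le) auto
  then show ?thesis by (simp add: rep_map)
qed

lemma contains_snoc_I:
  assumes "i1 < i2" "i2 < i3" "i3 < n" "red [f i1, f i2, f i3, v] = p"
  shows "contains (map f [0..<n] @ [v]) p"
  by (rule contains_I[of i1 i2 i3 n]) (use assms in \<open>simp_all add: nth_append\<close>)

lemma nz_gen: assumes "j < n" "f j \<noteq> 0" shows "map f [0..<n] \<noteq> replicate n 0"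
proof
  assume e: "map f [0..<n] = replicate n 0"
  have "map f [0..<n] ! j = f j" using assms by simp
  moreover have "replicate n (0::nat) ! j = 0" using assms by simp
  ultimately show False using e assms by simp
qed

lemma zeros_snoc: "replicate n (0::nat) @ [0] = replicate (Suc n) 0"
  by (simp add: replicate_append_same)

lemma zeros_snoc1: "1 \<le> n \<Longrightarrow> (\<And>p. p < n \<Longrightarrow> g p = 0) \<Longrightarrow> g n = 1 \<Longrightarrow> replicate n (0::nat) @ [1] = map g [0..<Suc n]"
  unfolding rep_map by (rule snoc_map) auto

lemma cont_0101: assumes "i1 < i2" "i2 < i3" "i3 < n" "f i1 < f i2" "f i3 = f i1" "f i2 = v"
  shows "contains (map f [0..<n] @ [v]) [0,1,0,1]"
proof -
  have e: "[f i1, f i2, f i3, v] = [f i1, f i2, f i1, f i2]" using assms(5,6) by simp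
  show ?thesis by (rule contains_snoc_I[OF assms(1-3)]) (simp only: e, (rule red_0101, rule assms(4)))
qed

lemma cont_0102: assumes "i1 < i2" "i2 < i3" "i3 < n" "f i1 < f i2" "f i3 = f i1" "f i2 < v"
  shows "contains (map f [0..<n] @ [v]) [0,1,0,2]"
proof -
  have e: "[f i1, f i2, f i3, v] = [f i1, f i2, f i1, v]" using assms(5,6) by simp
  show ?thesis by (rule contains_snoc_I[OF assms(1-3)]) (simp only: e, (rule red_0102, rule assms(4), rule assms(6)))
qed

lemma cont_0112: assumes "i1 < i2" "i2 < i3" "i3 < n" "f i1 < f i2" "f i3 = f i2" "f i2 < v"
  shows "contains (map f [0..<n] @ [v]) [0,1,1,2]"
proof -
  have e: "[f i1, f i2, f i3, v] = [f i1, f i2, f i2, v]" using assms(5,6) by simp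
  show ?thesis by (rule contains_snoc_I[OF assms(1-3)]) (simp only: e, (rule red_0112, rule assms(4), rule assms(6)))
qed

lemma cont_0120: assumes "i1 < i2" "i2 < i3" "i3 < n" "f i1 < f i2" "f i2 < f i3" "v = f i1"
  shows "contains (map f [0..<n] @ [v]) [0,1,2,0]"
proof -
  have e: "[f i1, f i2, f i3, v] = [f i1, f i2, f i3, f i1]" using assms(5,6) by simp
  show ?thesis by (rule contains_snoc_I[OF assms(1-3)]) (simp only: e, (rule red_0120, rule assms(4), rule assms(5)))
qed

lemma cont_0121: assumes "i1 < i2" "i2 < i3" "i3 < n" "f i1 < f i2" "f i2 < f i3" "v = f i2"
  shows "contains (map f [0..<n] @ [v]) [0,1,2,1]"
proof -
  have e: "[f i1, f i2, f i3, v] = [f i1, f i2, f i3, f i2]" using assms(5,6) by simp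
  show ?thesis by (rule contains_snoc_I[OF assms(1-3)]) (simp only: e, (rule red_0121, rule assms(4), rule assms(5)))
qed

definition f1 :: "nat \<Rightarrow> nat \<Rightarrow> nat \<Rightarrow> nat \<Rightarrow> nat" where
  "f1 i j l p = (if p \<le> i then 0 else if p < l then min p j - i else j - i - 1)"

definition F1 :: "nat \<Rightarrow> nat\<times>nat\<times>nat \<Rightarrow> nat list" where
  "F1 n t = (case t of (i,j,l) \<Rightarrow> map (f1 i j l) [0..<n])"

abbreviation "P1 \<equiv> {[0,1,0,1], [0,1,0,2], [0,1,1,2], [0,1,2,0]} :: nat list set"

lemma S1_asc:
  assumes "i < j" "j < l" "l \<le> n"
  shows "ascent_seq (map (f1 i j l) [0..<n])"
proof (rule ascent_map)
  show "f1 i j l 0 = 0" by (simp add: f1_def)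
  show "1 \<le> n" using assms by simp
  fix p assume p: "1 \<le> p" "p < n"
  show "f1 i j l p \<le> 1 + asc (map (f1 i j l) [0..<p])"
  proof (cases "p \<le> i")
    case True then show ?thesis by (simp add: f1_def)
  next
    case False
    have "card {i..<min p j - 1} \<le> asc (map (f1 i j l) [0..<p])"
      by (rule asc_ge) (use assms False in \<open>auto simp: f1_def\<close>)
    then show ?thesis using False assms by (auto simp: f1_def)
  qed
qed

lemma S1_ascle:
  assumes "i < j" "j < l" "l \<le> n"
  shows "asc (map (f1 i j l) [0..<n]) \<le> j - i"
proof -
  have "asc (map (f1 i j l) [0..<n]) \<le> card {i..<j}"
    by (rule asc_le) (use assms in \<open>auto simp: f1_def split: if_splits\<close>)
  then show ?thesis by simp
qed

lemma S1_inj: "inj_on (F1 n) (Tri n)"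
proof (rule inj_onI)
  fix t t' assume t: "t \<in> Tri n" and t': "t' \<in> Tri n" and e: "F1 n t = F1 n t'"
  obtain i j l where tt: "t = (i,j,l)" by (cases t) auto
  obtain i' j' l' where tt': "t' = (i',j',l')" by (cases t') auto
  have o: "i<j" "j<l" "l\<le>n" "i'<j'" "j'<l'" "l'\<le>n" using t t' tt tt' by (auto simp: Tri_def)
  have E: "f1 i j l p = f1 i' j' l' p" if "p < n" for p
    using map_eqD[of "f1 i j l" n "f1 i' j' l'" p] e that unfolding tt tt' F1_def by simp
  have "i = i'"
    using E[of "Suc i"] E[of "Suc i'"] o by (auto simp: f1_def split: if_splits)
  moreover have "j = j'"
  proof -
    have "\<not> j < j'" if o: "i<j" "j<l" "l\<le>n" "i'<j'" "j'<l'" "l'\<le>n" "i = i'"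
      and E: "\<And>p. p < n \<Longrightarrow> f1 i j l p = f1 i' j' l' p" for i j l i' j' l'
    proof
      assume "j < j'"
      then have a: "Suc j < n" "Suc j < l'" "Suc j \<le> j'" using o by auto
      have "f1 i j l (Suc j) \<le> j - i" "f1 i' j' l' (Suc j) = Suc j - i'"
        using a o by (auto simp: f1_def)
      then show False using E[OF a(1)] o by simp
    qed
    from this[of i j l i' j' l'] this[of i' j' l' i j l] o E \<open>i = i'\<close> show ?thesis by force
  qed
  moreover have "l = l'"
  proof -
    have "\<not> l < l'" if o: "i<j" "j<l" "l\<le>n" "i'<j'" "j'<l'" "l'\<le>n" "i = i'" "j = j'"
      and E: "\<And>p. p < n \<Longrightarrow> f1 i j l p = f1 i' j' l' p" for i j l i' j' l'
    proof
      assume "l < l'"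
      then have a: "l < n" using o by auto
      have "f1 i j l l = j - i - 1" "f1 i' j' l' l = j - i"
        using a o \<open>l < l'\<close> by (auto simp: f1_def)
      then show False using E[OF a] o by simp
    qed
    from this[of i j l i' j' l'] this[of i' j' l' i j l] o E \<open>i = i'\<close> \<open>j = j'\<close> show ?thesis by force
  qed
  ultimately show "t = t'" using tt tt' by simp
qed

lemma S1_nz: "t \<in> Tri n \<Longrightarrow> F1 n t \<noteq> replicate n 0"
proof -
  assume "t \<in> Tri n"
  then obtain i j l where t: "t = (i,j,l)" "i<j" "j<l" "l \<le> n" unfolding Tri_def by auto
  have "map (f1 i j l) [0..<n] \<noteq> replicate n 0"
    by (rule nz_gen[of j]) (use t in \<open>auto simp: f1_def\<close>)
  then show ?thesis using t by (simp add: F1_def)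
qed

lemma S1_avoid:
  assumes "i < j" "j < l" "l \<le> n"
  shows "\<forall>p\<in>P1. avoids (map (f1 i j l) [0..<n]) p"
proof -
  have "avoids (map (f1 i j l) [0..<n]) [0,1,0,1]"
    by (rule avoid_0101) (use assms in \<open>auto simp: f1_def split: if_splits\<close>)
  moreover have "avoids (map (f1 i j l) [0..<n]) [0,1,0,2]"
    by (rule avoid_0102) (use assms in \<open>auto simp: f1_def split: if_splits\<close>)
  moreover have "avoids (map (f1 i j l) [0..<n]) [0,1,1,2]"
    by (rule avoid_0112) (use assms in \<open>auto simp: f1_def split: if_splits\<close>)
  moreover have "avoids (map (f1 i j l) [0..<n]) [0,1,2,0]"
    by (rule avoid_0120) (use assms in \<open>auto simp: f1_def split: if_splits\<close>)
  ultimately show ?thesis by auto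
qed

lemma S1_step:
  assumes n1: "1 \<le> n" and x: "x \<in> insert (replicate n 0) (F1 n ` Tri n)" and v: "v \<le> 1 + asc x"
  and av: "\<forall>p\<in>P1. avoids (x@[v]) p"
  shows "x@[v] \<in> insert (replicate (Suc n) 0) (F1 (Suc n) ` Tri (Suc n))"
proof (cases "x = replicate n 0")
  case True
  then have "v \<le> 1" using v asc_zeros by simp
  then consider "v = 0" | "v = 1" by linarith
  then show ?thesis
  proof cases
    case 1 then show ?thesis using True zeros_snoc by simp
  next
    case 2
    have "x@[v] = F1 (Suc n) (n-1, n, Suc n)"
      unfolding True 2 F1_def prod.case by (rule zeros_snoc1) (use n1 in \<open>auto simp: f1_def\<close>)
    moreover have "(n-1, n, Suc n) \<in> Tri (Suc n)" using n1 by (auto simp: Tri_def)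
    ultimately show ?thesis by blast
  qed
next
  case False
  then obtain i j l where t: "(i,j,l) \<in> Tri n" and xe: "x = map (f1 i j l) [0..<n]"
    using x by (auto simp: F1_def)
  have o: "i<j" "j<l" "l \<le> n" using t by (auto simp: Tri_def)
  have vk: "v \<le> j - i + 1" using v S1_ascle[OF o] xe by simp
  have nc: "\<not> contains (map (f1 i j l) [0..<n] @ [v]) p" if "p \<in> P1" for p
    using av that xe unfolding avoids_def by auto
  consider "v = j - i + 1" | "v = j - i" | "v = j - i - 1" | "v + 2 \<le> j - i" using vk by linarith
  then show ?thesis
  proof cases
    case 1
    show ?thesis
    proof (cases "l = n")
      case ln: True
      show ?thesis
      proof (cases "l = j + 1")
        case True
        have "x@[v] = F1 (Suc n) (i, j+1, Suc n)" unfolding xe F1_def 1 prod.case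
          by (rule snoc_map) (use o ln True in \<open>auto simp: f1_def\<close>)
        moreover have "(i, j+1, Suc n) \<in> Tri (Suc n)" using o ln True by (auto simp: Tri_def)
        ultimately show ?thesis by blast
      next
        case False
        have "contains (map (f1 i j l) [0..<n] @ [v]) [0,1,1,2]"
          by (rule cont_0112[of i j "j+1"]) (use o ln False 1 in \<open>auto simp: f1_def\<close>)
        then show ?thesis using nc by auto
      qed
    next
      case False
      have "contains (map (f1 i j l) [0..<n] @ [v]) [0,1,0,2]"
        by (rule cont_0102[of "j-1" j "n-1"]) (use o False 1 in \<open>auto simp: f1_def\<close>)
      then show ?thesis using nc by auto
    qed
  next
    case 2
    show ?thesis
    proof (cases "l = n")
      case ln: True
      have "x@[v] = F1 (Suc n) (i, j, Suc n)" unfolding xe F1_def 2 prod.case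
        by (rule snoc_map) (use o ln in \<open>auto simp: f1_def\<close>)
      moreover have "(i, j, Suc n) \<in> Tri (Suc n)" using o ln by (auto simp: Tri_def)
      ultimately show ?thesis by blast
    next
      case False
      have "contains (map (f1 i j l) [0..<n] @ [v]) [0,1,0,1]"
        by (rule cont_0101[of "j-1" j "n-1"]) (use o False 2 in \<open>auto simp: f1_def\<close>)
      then show ?thesis using nc by auto
    qed
  next
    case 3
    have "x@[v] = F1 (Suc n) (i, j, l)" unfolding xe F1_def 3 prod.case
      by (rule snoc_map) (use o in \<open>auto simp: f1_def\<close>)
    moreover have "(i, j, l) \<in> Tri (Suc n)" using o by (auto simp: Tri_def)
    ultimately show ?thesis by blast
  next
    case 4
    have "contains (map (f1 i j l) [0..<n] @ [v]) [0,1,2,0]"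
      by (rule cont_0120[of "i+v" "i+v+1" j]) (use o 4 in \<open>auto simp: f1_def\<close>)
    then show ?thesis using nc by auto
  qed
qed

theorem set1: "1 \<le> n \<Longrightarrow> a_P P1 n = 1 + ((n + 1) choose 3)"
proof (rule generic[where F = F1])
  show "\<forall>p\<in>P1. length p = 4 \<and> p!0 < p!1" by simp
  show "F1 n t \<in> Aset P1 n" if n1: "1 \<le> n" and tt: "t \<in> Tri n" for n t
  proof -
    obtain i j l where t: "t = (i,j,l)" "i<j" "j<l" "l\<le>n" using tt unfolding Tri_def by auto
    show ?thesis unfolding Aset_def F1_def t using S1_asc[OF t(2-4)] S1_avoid[OF t(2-4)] by simp
  qed
  show "inj_on (F1 n) (Tri n)" for n by (rule S1_inj)
  show "F1 n t \<noteq> replicate n 0" if "t \<in> Tri n" for n t using S1_nz that by blast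
  show "x@[v] \<in> insert (replicate (Suc n) 0) (F1 (Suc n) ` Tri (Suc n))"
    if "1 \<le> n" "x \<in> insert (replicate n 0) (F1 n ` Tri n)" "v \<le> 1 + asc x" "\<forall>p\<in>P1. avoids (x@[v]) p"
    for n x v using S1_step that by blast
qed

definition f2 :: "nat \<Rightarrow> nat \<Rightarrow> nat \<Rightarrow> nat \<Rightarrow> nat" where
  "f2 i j l p = (if p \<le> i then 0 else if p < l then min p j - i else 0)"

definition F2 :: "nat \<Rightarrow> nat\<times>nat\<times>nat \<Rightarrow> nat list" where
  "F2 n t = (case t of (i,j,l) \<Rightarrow> map (f2 i j l) [0..<n])"

abbreviation "P2 \<equiv> {[0,1,0,1], [0,1,0,2], [0,1,1,2], [0,1,2,1]} :: nat list set"

lemma S2_avoid: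
  assumes "i < j" "j < l" "l \<le> n"
  shows "\<forall>p\<in>P2. avoids (map (f2 i j l) [0..<n]) p"
proof -
  have "avoids (map (f2 i j l) [0..<n]) [0,1,0,1]"
    by (rule avoid_0101) (use assms in \<open>auto simp: f2_def split: if_splits\<close>)
  moreover have "avoids (map (f2 i j l) [0..<n]) [0,1,0,2]"
    by (rule avoid_0102) (use assms in \<open>auto simp: f2_def split: if_splits\<close>)
  moreover have "avoids (map (f2 i j l) [0..<n]) [0,1,1,2]"
    by (rule avoid_0112) (use assms in \<open>auto simp: f2_def split: if_splits\<close>)
  moreover have "avoids (map (f2 i j l) [0..<n]) [0,1,2,1]"
    by (rule avoid_0121) (use assms in \<open>auto simp: f2_def split: if_splits\<close>)
  ultimately show ?thesis by auto
qed

lemma S2_asc: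
  assumes "i < j" "j < l" "l \<le> n"
  shows "ascent_seq (map (f2 i j l) [0..<n])"
proof (rule ascent_map)
  show "f2 i j l 0 = 0" by (simp add: f2_def)
  show "1 \<le> n" using assms by simp
  fix p assume p: "1 \<le> p" "p < n"
  show "f2 i j l p \<le> 1 + asc (map (f2 i j l) [0..<p])"
  proof (cases "p \<le> i")
    case True then show ?thesis by (simp add: f2_def)
  next
    case False
    have "card {i..<min p j - 1} \<le> asc (map (f2 i j l) [0..<p])"
      by (rule asc_ge) (use assms False in \<open>auto simp: f2_def\<close>)
    then show ?thesis using False assms by (auto simp: f2_def)
  qed
qed

lemma S2_ascle:
  assumes "i < j" "j < l" "l \<le> n"
  shows "asc (map (f2 i j l) [0..<n]) \<le> j - i"
proof -
  have "asc (map (f2 i j l) [0..<n]) \<le> card {i..<j}"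
    by (rule asc_le) (use assms in \<open>auto simp: f2_def split: if_splits\<close>)
  then show ?thesis by simp
qed

lemma S2_inj: "inj_on (F2 n) (Tri n)"
proof (rule inj_onI)
  fix t t' assume t: "t \<in> Tri n" and t': "t' \<in> Tri n" and e: "F2 n t = F2 n t'"
  obtain i j l where tt: "t = (i,j,l)" by (cases t) auto
  obtain i' j' l' where tt': "t' = (i',j',l')" by (cases t') auto
  have o: "i<j" "j<l" "l\<le>n" "i'<j'" "j'<l'" "l'\<le>n" using t t' tt tt' by (auto simp: Tri_def)
  have E: "f2 i j l p = f2 i' j' l' p" if "p < n" for p
    using map_eqD[of "f2 i j l" n "f2 i' j' l'" p] e that unfolding tt tt' F2_def by simp
  have "i = i'"
    using E[of "Suc i"] E[of "Suc i'"] o by (auto simp: f2_def split: if_splits)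
  moreover have "j = j'"
  proof -
    have "\<not> j < j'" if o: "i<j" "j<l" "l\<le>n" "i'<j'" "j'<l'" "l'\<le>n" "i = i'"
      and E: "\<And>p. p < n \<Longrightarrow> f2 i j l p = f2 i' j' l' p" for i j l i' j' l'
    proof
      assume "j < j'"
      then have a: "Suc j < n" "Suc j < l'" "Suc j \<le> j'" using o by auto
      have "f2 i j l (Suc j) \<le> j - i" "f2 i' j' l' (Suc j) = Suc j - i'"
        using a o by (auto simp: f2_def)
      then show False using E[OF a(1)] o by simp
    qed
    from this[of i j l i' j' l'] this[of i' j' l' i j l] o E \<open>i = i'\<close> show ?thesis by force
  qed
  moreover have "l = l'"
  proof -
    have "\<not> l < l'" if o: "i<j" "j<l" "l\<le>n" "i'<j'" "j'<l'" "l'\<le>n" "i = i'" "j = j'"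
      and E: "\<And>p. p < n \<Longrightarrow> f2 i j l p = f2 i' j' l' p" for i j l i' j' l'
    proof
      assume "l < l'"
      then have a: "l < n" using o by auto
      have "f2 i j l l = 0" "f2 i' j' l' l = j - i"
        using a o \<open>l < l'\<close> by (auto simp: f2_def)
      then show False using E[OF a] o by simp
    qed
    from this[of i j l i' j' l'] this[of i' j' l' i j l] o E \<open>i = i'\<close> \<open>j = j'\<close> show ?thesis by force
  qed
  ultimately show "t = t'" using tt tt' by simp
qed

lemma S2_nz: "t \<in> Tri n \<Longrightarrow> F2 n t \<noteq> replicate n 0"
proof -
  assume "t \<in> Tri n"
  then obtain i j l where t: "t = (i,j,l)" "i<j" "j<l" "l \<le> n" unfolding Tri_def by auto
  have "map (f2 i j l) [0..<n] \<noteq> replicate n 0"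
    by (rule nz_gen[of j]) (use t in \<open>auto simp: f2_def\<close>)
  then show ?thesis using t by (simp add: F2_def)
qed

lemma S2_step:
  assumes n1: "1 \<le> n" and x: "x \<in> insert (replicate n 0) (F2 n ` Tri n)" and v: "v \<le> 1 + asc x"
  and av: "\<forall>p\<in>P2. avoids (x@[v]) p"
  shows "x@[v] \<in> insert (replicate (Suc n) 0) (F2 (Suc n) ` Tri (Suc n))"
proof (cases "x = replicate n 0")
  case True
  then have "v \<le> 1" using v asc_zeros by simp
  then consider "v = 0" | "v = 1" by linarith
  then show ?thesis
  proof cases
    case 1 then show ?thesis using True zeros_snoc by simp
  next
    case 2
    have "x@[v] = F2 (Suc n) (n-1, n, Suc n)"
      unfolding True 2 F2_def prod.case by (rule zeros_snoc1) (use n1 in \<open>auto simp: f2_def\<close>)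
    moreover have "(n-1, n, Suc n) \<in> Tri (Suc n)" using n1 by (auto simp: Tri_def)
    ultimately show ?thesis by blast
  qed
next
  case False
  then obtain i j l where t: "(i,j,l) \<in> Tri n" and xe: "x = map (f2 i j l) [0..<n]"
    using x by (auto simp: F2_def)
  have o: "i<j" "j<l" "l \<le> n" using t by (auto simp: Tri_def)
  have vk: "v \<le> j - i + 1" using v S2_ascle[OF o] xe by simp
  have nc: "\<not> contains (map (f2 i j l) [0..<n] @ [v]) p" if "p \<in> P2" for p
    using av that xe unfolding avoids_def by auto
  consider "v = j - i + 1" | "v = j - i" | "v = 0" | "0 < v \<and> v < j - i" using vk by linarith
  then show ?thesis
  proof cases
    case 1
    show ?thesis
    proof (cases "l = n")
      case ln: True
      show ?thesis
      proof (cases "l = j + 1")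
        case True
        have "x@[v] = F2 (Suc n) (i, j+1, Suc n)" unfolding xe F2_def 1 prod.case
          by (rule snoc_map) (use o ln True in \<open>auto simp: f2_def\<close>)
        moreover have "(i, j+1, Suc n) \<in> Tri (Suc n)" using o ln True by (auto simp: Tri_def)
        ultimately show ?thesis by blast
      next
        case False
        have "contains (map (f2 i j l) [0..<n] @ [v]) [0,1,1,2]"
          by (rule cont_0112[of i j "j+1"]) (use o ln False 1 in \<open>auto simp: f2_def\<close>)
        then show ?thesis using nc by auto
      qed
    next
      case False
      have "contains (map (f2 i j l) [0..<n] @ [v]) [0,1,0,2]"
        by (rule cont_0102[of i j "n-1"]) (use o False 1 in \<open>auto simp: f2_def\<close>)
      then show ?thesis using nc by auto
    qed
  next
    case 2
    show ?thesis
    proof (cases "l = n")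
      case ln: True
      have "x@[v] = F2 (Suc n) (i, j, Suc n)" unfolding xe F2_def 2 prod.case
        by (rule snoc_map) (use o ln in \<open>auto simp: f2_def\<close>)
      moreover have "(i, j, Suc n) \<in> Tri (Suc n)" using o ln by (auto simp: Tri_def)
      ultimately show ?thesis by blast
    next
      case False
      have "contains (map (f2 i j l) [0..<n] @ [v]) [0,1,0,1]"
        by (rule cont_0101[of i j "n-1"]) (use o False 2 in \<open>auto simp: f2_def\<close>)
      then show ?thesis using nc by auto
    qed
  next
    case 3
    have "x@[v] = F2 (Suc n) (i, j, l)" unfolding xe F2_def 3 prod.case
      by (rule snoc_map) (use o in \<open>auto simp: f2_def\<close>)
    moreover have "(i, j, l) \<in> Tri (Suc n)" using o by (auto simp: Tri_def)
    ultimately show ?thesis by blast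
  next
    case 4
    have "contains (map (f2 i j l) [0..<n] @ [v]) [0,1,2,1]"
      by (rule cont_0121[of i "i+v" j]) (use o 4 in \<open>auto simp: f2_def\<close>)
    then show ?thesis using nc by auto
  qed
qed

theorem set2: "1 \<le> n \<Longrightarrow> a_P P2 n = 1 + ((n + 1) choose 3)"
proof (rule generic[where F = F2])
  show "\<forall>p\<in>P2. length p = 4 \<and> p!0 < p!1" by simp
  show "F2 n t \<in> Aset P2 n" if n1: "1 \<le> n" and tt: "t \<in> Tri n" for n t
  proof -
    obtain i j l where t: "t = (i,j,l)" "i<j" "j<l" "l\<le>n" using tt unfolding Tri_def by auto
    show ?thesis unfolding Aset_def F2_def t using S2_asc[OF t(2-4)] S2_avoid[OF t(2-4)] by simp
  qed
  show "inj_on (F2 n) (Tri n)" for n by (rule S2_inj)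
  show "F2 n t \<noteq> replicate n 0" if "t \<in> Tri n" for n t using S2_nz that by blast
  show "x@[v] \<in> insert (replicate (Suc n) 0) (F2 (Suc n) ` Tri (Suc n))"
    if "1 \<le> n" "x \<in> insert (replicate n 0) (F2 n ` Tri n)" "v \<le> 1 + asc x" "\<forall>p\<in>P2. avoids (x@[v]) p"
    for n x v using S2_step that by blast
qed

definition gB :: "nat \<Rightarrow> nat \<Rightarrow> nat \<Rightarrow> nat" where
  "gB i l p = (if p \<le> i then 0 else if p < l then 1 else 0)"

definition gC :: "nat \<Rightarrow> nat \<Rightarrow> nat \<Rightarrow> nat \<Rightarrow> nat" where
  "gC i j l p = (if p \<le> i then 0 else if p = Suc i then 1 else if p \<le> i + 1 + l - j then 0
     else if p < l then p + j - i - l else j - i)"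

definition f3 :: "nat \<Rightarrow> nat \<Rightarrow> nat \<Rightarrow> nat \<Rightarrow> nat \<Rightarrow> nat" where
  "f3 n i j l = (if l = n then f1 i j l else if j = Suc i then gB i l else gC i j l)"

definition F3 :: "nat \<Rightarrow> nat\<times>nat\<times>nat \<Rightarrow> nat list" where
  "F3 n t = (case t of (i,j,l) \<Rightarrow> map (f3 n i j l) [0..<n])"

abbreviation "P3 \<equiv> {[0,1,0,1], [0,1,1,2], [0,1,2,0], [0,1,2,1]} :: nat list set"

lemma SA_avoid:
  assumes "i < j" "j < l" "l = n"
  shows "\<forall>p\<in>P3. avoids (map (f1 i j l) [0..<n]) p"
proof -
  have "avoids (map (f1 i j l) [0..<n]) [0,1,0,1]"
    by (rule avoid_0101) (use assms in \<open>auto simp: f1_def split: if_splits\<close>)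
  moreover have "avoids (map (f1 i j l) [0..<n]) [0,1,1,2]"
    by (rule avoid_0112) (use assms in \<open>auto simp: f1_def split: if_splits\<close>)
  moreover have "avoids (map (f1 i j l) [0..<n]) [0,1,2,0]"
    by (rule avoid_0120) (use assms in \<open>auto simp: f1_def split: if_splits\<close>)
  moreover have "avoids (map (f1 i j l) [0..<n]) [0,1,2,1]"
    by (rule avoid_0121) (use assms in \<open>auto simp: f1_def split: if_splits\<close>)
  ultimately show ?thesis by auto
qed

lemma SB_avoid:
  assumes "i < l" "l < n"
  shows "\<forall>p\<in>P3. avoids (map (gB i l) [0..<n]) p"
proof -
  have "avoids (map (gB i l) [0..<n]) [0,1,0,1]"
    by (rule avoid_0101) (use assms in \<open>auto simp: gB_def split: if_splits\<close>)
  moreover have "avoids (map (gB i l) [0..<n]) [0,1,1,2]"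
    by (rule avoid_0112) (use assms in \<open>auto simp: gB_def split: if_splits\<close>)
  moreover have "avoids (map (gB i l) [0..<n]) [0,1,2,0]"
    by (rule avoid_0120) (use assms in \<open>auto simp: gB_def split: if_splits\<close>)
  moreover have "avoids (map (gB i l) [0..<n]) [0,1,2,1]"
    by (rule avoid_0121) (use assms in \<open>auto simp: gB_def split: if_splits\<close>)
  ultimately show ?thesis by auto
qed

lemma SC_avoid:
  assumes "Suc i < j" "j < l" "l < n"
  shows "\<forall>p\<in>P3. avoids (map (gC i j l) [0..<n]) p"
proof -
  have "avoids (map (gC i j l) [0..<n]) [0,1,0,1]"
    by (rule avoid_0101) (use assms in \<open>auto simp: gC_def split: if_splits\<close>)
  moreover have "avoids (map (gC i j l) [0..<n]) [0,1,1,2]"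
    by (rule avoid_0112) (use assms in \<open>auto simp: gC_def split: if_splits\<close>)
  moreover have "avoids (map (gC i j l) [0..<n]) [0,1,2,0]"
    by (rule avoid_0120) (use assms in \<open>auto simp: gC_def split: if_splits\<close>)
  moreover have "avoids (map (gC i j l) [0..<n]) [0,1,2,1]"
    by (rule avoid_0121) (use assms in \<open>auto simp: gC_def split: if_splits\<close>)
  ultimately show ?thesis by auto
qed

lemma f3A: "l = n \<Longrightarrow> f3 n i j l = f1 i j l" by (simp add: f3_def)
lemma f3B: "l \<noteq> n \<Longrightarrow> j = Suc i \<Longrightarrow> f3 n i j l = gB i l" by (simp add: f3_def)
lemma f3C: "l \<noteq> n \<Longrightarrow> j \<noteq> Suc i \<Longrightarrow> f3 n i j l = gC i j l" by (simp add: f3_def)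

lemma SB_asc:
  assumes "i < l" "l < n"
  shows "ascent_seq (map (gB i l) [0..<n])"
  by (rule ascent_map) (use assms in \<open>auto simp: gB_def\<close>)

lemma SC_asc:
  assumes "Suc i < j" "j < l" "l < n"
  shows "ascent_seq (map (gC i j l) [0..<n])"
proof (rule ascent_map)
  show "gC i j l 0 = 0" by (simp add: gC_def)
  show "1 \<le> n" using assms by simp
  fix p assume p: "1 \<le> p" "p < n"
  show "gC i j l p \<le> 1 + asc (map (gC i j l) [0..<p])"
  proof (cases "p \<le> i + 1 + l - j")
    case True then show ?thesis by (simp add: gC_def)
  next
    case False
    define s where "s = i + 1 + l - j"
    define e where "e = min (p - 1) l"
    have si: "i < s" using assms unfolding s_def by simp
    have "card (insert i {s..<e}) \<le> asc (map (gC i j l) [0..<p])"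
      by (rule asc_ge) (use assms False in \<open>auto simp: gC_def s_def e_def\<close>)
    moreover have "card (insert i {s..<e}) = Suc (e - s)" using si by simp
    ultimately show ?thesis using False assms unfolding s_def e_def by (auto simp: gC_def)
  qed
qed

lemma SB_ascle:
  assumes "i < l" "l < n"
  shows "asc (map (gB i l) [0..<n]) \<le> 1"
proof -
  have "asc (map (gB i l) [0..<n]) \<le> card {i}"
    by (rule asc_le) (use assms in \<open>auto simp: gB_def split: if_splits\<close>)
  then show ?thesis by simp
qed

lemma SC_ascle:
  assumes "Suc i < j" "j < l" "l < n"
  shows "asc (map (gC i j l) [0..<n]) \<le> j - i"
proof -
  have "asc (map (gC i j l) [0..<n]) \<le> card (insert i {i + 1 + l - j..<l})"
    by (rule asc_le) (use assms in \<open>auto simp: gC_def split: if_splits\<close>)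
  moreover have "card (insert i {i + 1 + l - j..<l}) = Suc (l - (i + 1 + l - j))" using assms by simp
  ultimately show ?thesis using assms by simp
qed

lemma S3_asc:
  assumes "i < j" "j < l" "l \<le> n"
  shows "ascent_seq (map (f3 n i j l) [0..<n])"
proof -
  consider "l = n" | "l \<noteq> n" "j = Suc i" | "l \<noteq> n" "j \<noteq> Suc i" by blast
  then show ?thesis
  proof cases
    case 1 then show ?thesis using S1_asc[OF assms] f3A by simp
  next
    case 2 then show ?thesis using SB_asc[of i l n] f3B assms by simp
  next
    case 3 then show ?thesis using SC_asc[of i j l n] f3C assms by simp
  qed
qed

lemma S3_avoid:
  assumes "i < j" "j < l" "l \<le> n"
  shows "\<forall>p\<in>P3. avoids (map (f3 n i j l) [0..<n]) p"
proof -
  consider "l = n" | "l \<noteq> n" "j = Suc i" | "l \<noteq> n" "j \<noteq> Suc i" by blast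
  then show ?thesis
  proof cases
    case 1 then show ?thesis using SA_avoid[of i j l n] f3A assms by simp
  next
    case 2 then show ?thesis using SB_avoid[of i l n] f3B assms by simp
  next
    case 3 then show ?thesis using SC_avoid[of i j l n] f3C assms by simp
  qed
qed

lemma S3_ascle:
  assumes "i < j" "j < l" "l \<le> n"
  shows "asc (map (f3 n i j l) [0..<n]) \<le> j - i"
proof -
  consider "l = n" | "l \<noteq> n" "j = Suc i" | "l \<noteq> n" "j \<noteq> Suc i" by blast
  then show ?thesis
  proof cases
    case 1 then show ?thesis using S1_ascle[OF assms] f3A by simp
  next
    case 2 then show ?thesis using SB_ascle[of i l n] f3B assms by simp
  next
    case 3 then show ?thesis using SC_ascle[of i j l n] f3C assms by simp
  qed
qed

lemma v_low: "p \<le> i \<Longrightarrow> f3 n i j l p = 0"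
  by (simp add: f3_def f1_def gB_def gC_def)

lemma v_i1: "i < j \<Longrightarrow> j < l \<Longrightarrow> l \<le> n \<Longrightarrow> f3 n i j l (Suc i) = 1"
  by (auto simp: f3_def f1_def gB_def gC_def)

lemma S3_nz: "t \<in> Tri n \<Longrightarrow> F3 n t \<noteq> replicate n 0"
proof -
  assume "t \<in> Tri n"
  then obtain i j l where t: "t = (i,j,l)" "i<j" "j<l" "l \<le> n" unfolding Tri_def by auto
  have "map (f3 n i j l) [0..<n] \<noteq> replicate n 0"
    by (rule nz_gen[of "Suc i"]) (use t v_i1[of i j l n] in auto)
  then show ?thesis using t by (simp add: F3_def)
qed

lemma S3_inj: "inj_on (F3 n) (Tri n)"
proof (rule inj_onI)
  fix t t' assume t: "t \<in> Tri n" and t': "t' \<in> Tri n" and e: "F3 n t = F3 n t'"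
  obtain i j l where tt: "t = (i,j,l)" by (cases t) auto
  obtain i' j' l' where tt': "t' = (i',j',l')" by (cases t') auto
  have o: "i<j" "j<l" "l\<le>n" "i'<j'" "j'<l'" "l'\<le>n" using t t' tt tt' by (auto simp: Tri_def)
  have E: "f3 n i j l p = f3 n i' j' l' p" if "p < n" for p
    using map_eqD[of "f3 n i j l" n "f3 n i' j' l'" p] e that unfolding tt tt' F3_def by simp
  have c1: "\<not> i < i'" if o: "i<j" "j<l" "l\<le>n" "i'<j'" "j'<l'" "l'\<le>n"
      and E: "\<And>p. p < n \<Longrightarrow> f3 n i j l p = f3 n i' j' l' p" for i j l i' j' l'
  proof
    assume "i < i'"
    then have "f3 n i' j' l' (Suc i) = 0" by (simp add: v_low)
    moreover have "f3 n i j l (Suc i) = 1" using v_i1 o by simp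
    moreover have "Suc i < n" using o by simp
    ultimately show False using E by force
  qed
  have ii: "i = i'" using c1[of i j l i' j' l'] c1[of i' j' l' i j l] o E by force
  have c2: False if o: "i<j" "j<l" "l = n" "i<j'" "j'<l'" "l' < n"
      and E: "\<And>p. p < n \<Longrightarrow> f3 n i j l p = f3 n i j' l' p" for i j l j' l'
  proof (cases "j' = Suc i")
    case True
    have "f3 n i j l (n - 1) = j - i" using o by (auto simp: f3_def f1_def)
    moreover have "f3 n i j' l' (n - 1) = 0" using o True by (auto simp: f3_def gB_def)
    ultimately show False using E[of "n - 1"] o by simp
  next
    case False
    have "f3 n i j l (Suc (Suc i)) \<noteq> 0" using o False by (auto simp: f3_def f1_def)
    moreover have "f3 n i j' l' (Suc (Suc i)) = 0" using o False by (auto simp: f3_def gC_def)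
    ultimately show False using E[of "Suc (Suc i)"] o False by simp
  qed
  have c3: False if o: "i<j" "j<l" "l < n" "j = Suc i" "Suc i<j'" "j'<l'" "l' < n"
      and E: "\<And>p. p < n \<Longrightarrow> f3 n i j l p = f3 n i j' l' p" for i j l j' l'
  proof -
    have "f3 n i j l (n - 1) = 0" using o by (auto simp: f3_def gB_def)
    moreover have "f3 n i j' l' (n - 1) = j' - i" using o by (auto simp: f3_def gC_def)
    ultimately show False using E[of "n - 1"] o by simp
  qed
  have c4: "\<not> j < j'" if o: "i<j" "j<l" "l = n" "i<j'" "j'<l'" "l' = n"
      and E: "\<And>p. p < n \<Longrightarrow> f3 n i j l p = f3 n i j' l' p" for i j l j' l'
  proof
    assume "j < j'"
    then have a: "Suc j < n" "Suc j < l'" "Suc j \<le> j'" using o by auto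
    have "f3 n i j l (Suc j) \<le> j - i" "f3 n i j' l' (Suc j) = Suc j - i"
      using a o by (auto simp: f3_def f1_def)
    then show False using E[OF a(1)] o by simp
  qed
  have c5: "\<not> l < l'" if o: "i<l" "l < n" "i < l'" "l' < n"
      and E: "\<And>p. p < n \<Longrightarrow> f3 n i (Suc i) l p = f3 n i (Suc i) l' p" for i l l'
  proof
    assume "l < l'"
    have "f3 n i (Suc i) l l = 0" "f3 n i (Suc i) l' l = 1"
      using o \<open>l < l'\<close> by (auto simp: f3_def gB_def)
    then show False using E[of l] o by simp
  qed
  have c6: "\<not> j < j'" if o: "Suc i<j" "j<l" "l < n" "Suc i<j'" "j'<l'" "l' < n"
      and E: "\<And>p. p < n \<Longrightarrow> f3 n i j l p = f3 n i j' l' p" for i j l j' l'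
  proof
    assume "j < j'"
    have "f3 n i j l (n - 1) = j - i" "f3 n i j' l' (n - 1) = j' - i"
      using o by (auto simp: f3_def gC_def)
    then show False using E[of "n - 1"] o \<open>j < j'\<close> by simp
  qed
  have c7: "\<not> l < l'" if o: "Suc i<j" "j<l" "l < n" "j<l'" "l' < n"
      and E: "\<And>p. p < n \<Longrightarrow> f3 n i j l p = f3 n i j l' p" for i j l l'
  proof
    assume "l < l'"
    have "f3 n i j l (i + 2 + l - j) \<noteq> 0" "f3 n i j l' (i + 2 + l - j) = 0"
      using o \<open>l < l'\<close> by (auto simp: f3_def gC_def)
    moreover have "i + 2 + l - j < n" using o by simp
    ultimately show False using E by metis
  qed
  have "j = j' \<and> l = l'"
  proof -
    consider "l = n" "l' = n" | "l = n" "l' \<noteq> n" | "l \<noteq> n" "l' = n" | "l \<noteq> n" "l' \<noteq> n" by blast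
    then show ?thesis
    proof cases
      case 1 then show ?thesis using c4[of i j l j' l'] c4[of i j' l' j l] o E ii by force
    next
      case 2 then show ?thesis using c2[of i j l j' l'] o E ii by force
    next
      case 3 then show ?thesis using c2[of i j' l' j l] o E ii by force
    next
      case 4
      consider "j = Suc i" "j' = Suc i" | "j = Suc i" "j' \<noteq> Suc i" | "j \<noteq> Suc i" "j' = Suc i"
        | "j \<noteq> Suc i" "j' \<noteq> Suc i" by blast
      then show ?thesis
      proof cases
        case 1 then show ?thesis using c5[of i l l'] c5[of i l' l] o E ii 4 by force
      next
        case 2 then show ?thesis using c3[of i j l j' l'] o E ii 4 by force
      next
        case 3 then show ?thesis using c3[of i j' l' j l] o E ii 4 by force
      next
        case 5: 4
        have jj: "j = j'" using c6[of i j l j' l'] c6[of i j' l' j l] o E ii 4 5 by force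
        then show ?thesis using c7[of i j l l'] c7[of i j l' l] o E ii 4 5 by force
      qed
    qed
  qed
  then show "t = t'" using tt tt' ii by simp
qed

lemma S3_step:
  assumes n1: "1 \<le> n" and x: "x \<in> insert (replicate n 0) (F3 n ` Tri n)" and v: "v \<le> 1 + asc x"
  and av: "\<forall>p\<in>P3. avoids (x@[v]) p"
  shows "x@[v] \<in> insert (replicate (Suc n) 0) (F3 (Suc n) ` Tri (Suc n))"
proof (cases "x = replicate n 0")
  case True
  then have "v \<le> 1" using v asc_zeros by simp
  then consider "v = 0" | "v = 1" by linarith
  then show ?thesis
  proof cases
    case 1 then show ?thesis using True zeros_snoc by simp
  next
    case 2
    have "x@[v] = F3 (Suc n) (n-1, n, Suc n)"
      unfolding True 2 F3_def prod.case by (rule zeros_snoc1) (use n1 in \<open>auto simp: f3_def f1_def\<close>)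
    moreover have "(n-1, n, Suc n) \<in> Tri (Suc n)" using n1 by (auto simp: Tri_def)
    ultimately show ?thesis by blast
  qed
next
  case False
  then obtain i j l where t: "(i,j,l) \<in> Tri n" and xe: "x = map (f3 n i j l) [0..<n]"
    using x by (auto simp: F3_def)
  have o: "i<j" "j<l" "l \<le> n" using t by (auto simp: Tri_def)
  have vk: "v \<le> j - i + 1" using v S3_ascle[OF o] xe by simp
  have nc: "\<not> contains (map (f3 n i j l) [0..<n] @ [v]) p" if "p \<in> P3" for p
    using av that xe unfolding avoids_def by auto
  have res: "x@[v] \<in> insert (replicate (Suc n) 0) (F3 (Suc n) ` Tri (Suc n))"
    if "(i',j',l') \<in> Tri (Suc n)" "\<And>p. p < n \<Longrightarrow> f3 n i j l p = f3 (Suc n) i' j' l' p"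
       "v = f3 (Suc n) i' j' l' n" for i' j' l'
  proof -
    have "x@[v] = F3 (Suc n) (i',j',l')" unfolding xe F3_def prod.case
      by (rule snoc_map) (use that in auto)
    then show ?thesis using that(1) by blast
  qed
  consider "l = n" | "l \<noteq> n" "j = Suc i" | "l \<noteq> n" "j \<noteq> Suc i" by blast
  then show ?thesis
  proof cases
    case A: 1
    consider "v = j - i + 1" | "v = j - i" | "v = 0" "j = Suc i" | "v = 0" "j \<noteq> Suc i"
      | "0 < v" "v < j - i" using vk by linarith
    then show ?thesis
    proof cases
      case 1
      show ?thesis
      proof (cases "l = j + 1")
        case True
        show ?thesis by (rule res[of i "j+1" "Suc n"]) (use o A True 1 in \<open>auto simp: Tri_def f3_def f1_def\<close>)
      next
        case False
        have "contains (map (f3 n i j l) [0..<n] @ [v]) [0,1,1,2]"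
          by (rule cont_0112[of i j "j+1"]) (use o A False 1 in \<open>auto simp: f3_def f1_def\<close>)
        then show ?thesis using nc by auto
      qed
    next
      case 2
      show ?thesis by (rule res[of i j "Suc n"]) (use o A 2 in \<open>auto simp: Tri_def f3_def f1_def\<close>)
    next
      case 3
      show ?thesis by (rule res[of i j n]) (use o A 3 in \<open>auto simp: Tri_def f3_def f1_def gB_def\<close>)
    next
      case 4
      have "contains (map (f3 n i j l) [0..<n] @ [v]) [0,1,2,0]"
        by (rule cont_0120[of i "Suc i" j]) (use o A 4 in \<open>auto simp: f3_def f1_def\<close>)
      then show ?thesis using nc by auto
    next
      case 5
      have "contains (map (f3 n i j l) [0..<n] @ [v]) [0,1,2,1]"
        by (rule cont_0121[of i "i+v" j]) (use o A 5 in \<open>auto simp: f3_def f1_def\<close>)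
      then show ?thesis using nc by auto
    qed
  next
    case B: 2
    consider "v = 0" | "v = 1" | "v = 2" using vk B by linarith
    then show ?thesis
    proof cases
      case 1
      show ?thesis by (rule res[of i j l]) (use o B 1 in \<open>auto simp: Tri_def f3_def gB_def\<close>)
    next
      case 2
      have "contains (map (f3 n i j l) [0..<n] @ [v]) [0,1,0,1]"
        by (rule cont_0101[of i j "n - 1"]) (use o B 2 in \<open>auto simp: f3_def gB_def\<close>)
      then show ?thesis using nc by auto
    next
      case 3
      show ?thesis
      proof (cases "l = j + 1")
        case True
        show ?thesis by (rule res[of i l n]) (use o B True 3 in \<open>auto simp: Tri_def f3_def gB_def gC_def\<close>)
      next
        case False
        have "contains (map (f3 n i j l) [0..<n] @ [v]) [0,1,1,2]"
          by (rule cont_0112[of i j "j+1"]) (use o B False 3 in \<open>auto simp: f3_def gB_def\<close>)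
        then show ?thesis using nc by auto
      qed
    qed
  next
    case C: 3
    consider "v = j - i + 1" | "v = j - i" | "v = 0" | "v = 1" | "2 \<le> v" "v < j - i"
      using vk by linarith
    then show ?thesis
    proof cases
      case 1
      show ?thesis
      proof (cases "l = n - 1")
        case True
        show ?thesis by (rule res[of i "j+1" n]) (use o C True 1 in \<open>auto simp: Tri_def f3_def gC_def\<close>)
      next
        case False
        have "contains (map (f3 n i j l) [0..<n] @ [v]) [0,1,1,2]"
          by (rule cont_0112[of i l "l+1"]) (use o C False 1 in \<open>auto simp: f3_def gC_def\<close>)
        then show ?thesis using nc by auto
      qed
    next
      case 2
      show ?thesis by (rule res[of i j l]) (use o C 2 in \<open>auto simp: Tri_def f3_def gC_def\<close>)
    next
      case 3
      have "contains (map (f3 n i j l) [0..<n] @ [v]) [0,1,2,0]"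
        by (rule cont_0120[of i "Suc i" l]) (use o C 3 in \<open>auto simp: f3_def gC_def\<close>)
      then show ?thesis using nc by auto
    next
      case 4
      have "contains (map (f3 n i j l) [0..<n] @ [v]) [0,1,2,1]"
        by (rule cont_0121[of i "Suc i" l]) (use o C 4 in \<open>auto simp: f3_def gC_def\<close>)
      then show ?thesis using nc by auto
    next
      case 5
      have "contains (map (f3 n i j l) [0..<n] @ [v]) [0,1,2,1]"
        by (rule cont_0121[of i "v + i + l - j" l]) (use o C 5 in \<open>auto simp: f3_def gC_def\<close>)
      then show ?thesis using nc by auto
    qed
  qed
qed

theorem set3: "1 \<le> n \<Longrightarrow> a_P P3 n = 1 + ((n + 1) choose 3)"
proof (rule generic[where F = F3])
  show "\<forall>p\<in>P3. length p = 4 \<and> p!0 < p!1" by simp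
  show "F3 n t \<in> Aset P3 n" if n1: "1 \<le> n" and tt: "t \<in> Tri n" for n t
  proof -
    obtain i j l where t: "t = (i,j,l)" "i<j" "j<l" "l\<le>n" using tt unfolding Tri_def by auto
    show ?thesis unfolding Aset_def F3_def t using S3_asc[OF t(2-4)] S3_avoid[OF t(2-4)] by simp
  qed
  show "inj_on (F3 n) (Tri n)" for n by (rule S3_inj)
  show "F3 n t \<noteq> replicate n 0" if "t \<in> Tri n" for n t using S3_nz that by blast
  show "x@[v] \<in> insert (replicate (Suc n) 0) (F3 (Suc n) ` Tri (Suc n))"
    if "1 \<le> n" "x \<in> insert (replicate n 0) (F3 n ` Tri n)" "v \<le> 1 + asc x" "\<forall>p\<in>P3. avoids (x@[v]) p"
    for n x v using S3_step that by blast
qed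

theorem theorem5p1:
  fixes n :: nat
  assumes "n \<ge> 1"
  shows "a_P {[0,1,0,1], [0,1,0,2], [0,1,1,2], [0,1,2,0]} n = 1 + ((n + 1) choose 3) \<and>
         a_P {[0,1,0,1], [0,1,0,2], [0,1,1,2], [0,1,2,1]} n = 1 + ((n + 1) choose 3) \<and>
         a_P {[0,1,0,1], [0,1,1,2], [0,1,2,0], [0,1,2,1]} n = 1 + ((n + 1) choose 3)"
  using set1[OF assms] set2[OF assms] set3[OF assms] by simp

end
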